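(* Let $C>0$ and $n\geq\mathrm{e}^{C/8}M\log M$, and draw the entries of an $M\times n$ matrix $\Phi=\{\varphi_i\}_{i=1}^n$ independently from $\mathbb{C}\mathcal{N}(0,\frac1M)$. Let $\beta:=3\mathrm{e}^{-C/8}$. Then with overwhelming probability, \[ \#\Big\{i:\ |\langle x,\varphi_i\rangle|^2>\frac{C}{M}\Big\}<\beta n \] for every unit-norm $x\in\mathbb{C}^M$.
   Context: $\mathbb{C}\mathcal{N}(0,\sigma^2)$ is the complex Gaussian with independent $\mathcal{N}(0,\sigma^2/2)$ real and imaginary parts. "With overwhelming probability" means with probability tending to $1$ exponentially fast as $M\to\infty$ (probability at least $1-c_0\mathrm{e}^{-c_1M}$ for constants $c_0,c_1>0$). *)

theory Defs
  imports "HOL-Probability.Probability"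
begin

text \<open>Complex Gaussian CN(0, s2): independent real and imaginary parts, each N(0, s2/2).
  normal_density mu sigma uses the standard deviation sigma.\<close>
definition complex_gaussian :: "real \<Rightarrow> complex measure" where
  "complex_gaussian s2 =
     distr (density lborel (normal_density 0 (sqrt (s2 / 2))) \<Otimes>\<^sub>M
            density lborel (normal_density 0 (sqrt (s2 / 2))))
           borel (\<lambda>(a, b). Complex a b)"

text \<open>Random M x n matrix Phi with i.i.d. CN(0, 1/M) entries; entry (j, i) is the
  j-th coordinate of the column phi_i, j < M, i < n.\<close>
definition gaussian_matrix :: "nat \<Rightarrow> nat \<Rightarrow> (nat \<times> nat \<Rightarrow> complex) measure" where
  "gaussian_matrix M n = (\<Pi>\<^sub>M p \<in> {0..<M} \<times> {0..<n}. complex_gaussian (1 / real M))"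

definition col_inner :: "nat \<Rightarrow> (nat \<Rightarrow> complex) \<Rightarrow> (nat \<times> nat \<Rightarrow> complex) \<Rightarrow> nat \<Rightarrow> complex" where
  "col_inner M x Phi i = (\<Sum>j<M. x j * cnj (Phi (j, i)))"

end

theory Submission
  imports Defs
begin


lemma nn_integral_normal_density:
  assumes "\<sigma> > 0"
  shows "(\<integral>\<^sup>+x. ennreal (normal_density \<mu> \<sigma> x) \<partial>lborel) = 1"
proof -
  have "(\<integral>\<^sup>+x. ennreal (normal_density \<mu> \<sigma> x) \<partial>lborel) = ennreal (\<integral>x. normal_density \<mu> \<sigma> x \<partial>lborel)"
    by (rule nn_integral_eq_integral) (auto intro: integrable_normal_density assms)
  also have "(\<integral>x. normal_density \<mu> \<sigma> x \<partial>lborel) = 1"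
    using integral_normal_moment_even[of \<sigma> \<mu> 0] assms by simp
  finally show ?thesis by simp
qed

lemma gauss_mgf:
  assumes "\<sigma> > 0"
  shows "(\<integral>\<^sup>+x. ennreal (normal_density 0 \<sigma> x * exp (t * x)) \<partial>lborel) = ennreal (exp (t\<^sup>2 * \<sigma>\<^sup>2 / 2))"
proof -
  have eq: "normal_density 0 \<sigma> x * exp (t * x) = exp (t\<^sup>2 * \<sigma>\<^sup>2 / 2) * normal_density (t * \<sigma>\<^sup>2) \<sigma> x" for x
  proof -
    have "-(x - 0)\<^sup>2/ (2 * \<sigma>\<^sup>2) + t * x = t\<^sup>2 * \<sigma>\<^sup>2 / 2 + (-(x - t * \<sigma>\<^sup>2)\<^sup>2/ (2 * \<sigma>\<^sup>2))"
      using assms by (simp add: field_simps power2_eq_square)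
    then show ?thesis unfolding normal_density_def
      by (simp add: exp_add[symmetric] mult_ac)
  qed
  show ?thesis
    by (simp add: eq ennreal_mult nn_integral_cmult nn_integral_normal_density assms)
qed

lemma gauss_sq_mgf:
  assumes "\<sigma> > 0" "2 * a * \<sigma>\<^sup>2 < 1"
  shows "(\<integral>\<^sup>+x. ennreal (normal_density 0 \<sigma> x * exp (a * x\<^sup>2)) \<partial>lborel) = ennreal (1 / sqrt (1 - 2 * a * \<sigma>\<^sup>2))"
proof -
  define \<tau> where "\<tau> = \<sigma> / sqrt (1 - 2 * a * \<sigma>\<^sup>2)"
  have q: "1 - 2 * a * \<sigma>\<^sup>2 > 0" using assms by simp
  have tp: "\<tau> > 0" using assms q unfolding \<tau>_def by simp
  have t2: "\<tau>\<^sup>2 = \<sigma>\<^sup>2 / (1 - 2 * a * \<sigma>\<^sup>2)" unfolding \<tau>_def using q by (simp add: power_divide)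
  have eq: "normal_density 0 \<sigma> x * exp (a * x\<^sup>2) = (1 / sqrt (1 - 2 * a * \<sigma>\<^sup>2)) * normal_density 0 \<tau> x" for x
  proof -
    have e: "-(x - 0)\<^sup>2/ (2 * \<sigma>\<^sup>2) + a * x\<^sup>2 = -(x - 0)\<^sup>2/ (2 * \<tau>\<^sup>2)"
      using assms q unfolding t2 by (simp add: field_simps)
    have p: "1 / sqrt (2 * pi * \<sigma>\<^sup>2) = (1 / sqrt (1 - 2 * a * \<sigma>\<^sup>2)) * (1 / sqrt (2 * pi * \<tau>\<^sup>2))"
      unfolding t2 using q assms by (simp add: real_sqrt_divide real_sqrt_mult field_simps)
    have "normal_density 0 \<sigma> x * exp (a * x\<^sup>2) = 1 / sqrt (2 * pi * \<sigma>\<^sup>2) * exp (-(x - 0)\<^sup>2/ (2 * \<sigma>\<^sup>2) + a * x\<^sup>2)"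
      unfolding normal_density_def by (simp add: mult_exp_exp algebra_simps)
    also have "\<dots> = (1 / sqrt (1 - 2 * a * \<sigma>\<^sup>2)) * (1 / sqrt (2 * pi * \<tau>\<^sup>2) * exp (-(x - 0)\<^sup>2/ (2 * \<tau>\<^sup>2)))"
      unfolding p e by (simp only: mult.assoc)
    finally show ?thesis unfolding normal_density_def .
  qed
  have "(\<integral>\<^sup>+x. ennreal (normal_density 0 \<sigma> x * exp (a * x\<^sup>2)) \<partial>lborel)
     = (\<integral>\<^sup>+x. ennreal (1 / sqrt (1 - 2 * a * \<sigma>\<^sup>2)) * ennreal (normal_density 0 \<tau> x) \<partial>lborel)"
    using q by (intro nn_integral_cong, subst ennreal_mult[symmetric]) (auto simp: eq)
  also have "\<dots> = ennreal (1 / sqrt (1 - 2 * a * \<sigma>\<^sup>2))"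
    by (subst nn_integral_cmult) (auto simp only: nn_integral_normal_density[OF tp] mult_1_right, measurable)
  finally show ?thesis .
qed

lemma borel_measurable_Complex[measurable]:
  assumes [measurable]: "f \<in> borel_measurable M" "g \<in> borel_measurable M"
  shows "(\<lambda>x. Complex (f x) (g x)) \<in> borel_measurable M"
  unfolding Complex_eq by measurable

lemma cg_prod:
  fixes f g :: "real \<Rightarrow> real"
  assumes [measurable]: "f \<in> borel_measurable borel" "g \<in> borel_measurable borel"
  and nn: "\<And>x. f x \<ge> 0" "\<And>x. g x \<ge> 0" and s0: "s > 0"
  shows "(\<integral>\<^sup>+z. ennreal (f (Re z) * g (Im z)) \<partial>complex_gaussian s)
    = (\<integral>\<^sup>+x. ennreal (normal_density 0 (sqrt (s/2)) x * f x) \<partial>lborel) *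
      (\<integral>\<^sup>+y. ennreal (normal_density 0 (sqrt (s/2)) y * g y) \<partial>lborel)"
proof -
  define N where "N = density lborel (normal_density 0 (sqrt (s/2)))"
  have sp: "sqrt (s/2) > 0" using s0 by simp
  interpret N: prob_space N unfolding N_def by (rule prob_space_normal_density[OF sp])
  interpret P: pair_sigma_finite N N by standard
  have [measurable_cong]: "sets N = sets borel" by (simp add: N_def)
  have "(\<integral>\<^sup>+z. ennreal (f (Re z) * g (Im z)) \<partial>complex_gaussian s)
     = (\<integral>\<^sup>+p. ennreal (f (fst p) * g (snd p)) \<partial>(N \<Otimes>\<^sub>M N))"
    unfolding complex_gaussian_def N_def[symmetric]
    by (subst nn_integral_distr) (auto intro!: nn_integral_cong simp: case_prod_beta', measurable)
  also have "\<dots> = (\<integral>\<^sup>+x. (\<integral>\<^sup>+y. ennreal (f x * g y) \<partial>N) \<partial>N)"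
    by (subst N.nn_integral_fst[symmetric]) auto
  also have "\<dots> = (\<integral>\<^sup>+x. ennreal (f x) * (\<integral>\<^sup>+y. ennreal (g y) \<partial>N) \<partial>N)"
    by (intro nn_integral_cong, subst nn_integral_cmult[symmetric]) (auto simp: ennreal_mult nn)
  also have "\<dots> = (\<integral>\<^sup>+x. ennreal (f x) \<partial>N) * (\<integral>\<^sup>+y. ennreal (g y) \<partial>N)"
    by (subst nn_integral_multc) auto
  also have "\<dots> = (\<integral>\<^sup>+x. ennreal (normal_density 0 (sqrt (s/2)) x * f x) \<partial>lborel) *
      (\<integral>\<^sup>+y. ennreal (normal_density 0 (sqrt (s/2)) y * g y) \<partial>lborel)"
    unfolding N_def by (subst (1 2) nn_integral_density) (auto simp: ennreal_mult nn intro!: arg_cong2[where f="(*)"] nn_integral_cong)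
  finally show ?thesis .
qed

lemma cg_exp_lin:
  assumes "s > 0"
  shows "(\<integral>\<^sup>+z. ennreal (exp (Re (c * cnj z))) \<partial>complex_gaussian s) = ennreal (exp (s * (cmod c)\<^sup>2 / 4))"
proof -
  have sp: "sqrt (s/2) > 0" using assms by simp
  have "(\<integral>\<^sup>+z. ennreal (exp (Re (c * cnj z))) \<partial>complex_gaussian s)
      = (\<integral>\<^sup>+z. ennreal (exp (Re c * Re z) * exp (Im c * Im z)) \<partial>complex_gaussian s)"
    by (intro nn_integral_cong) (simp add: exp_add[symmetric])
  also have "\<dots> = ennreal (exp ((Re c)\<^sup>2 * (sqrt (s/2))\<^sup>2 / 2)) * ennreal (exp ((Im c)\<^sup>2 * (sqrt (s/2))\<^sup>2 / 2))"
    by (subst cg_prod) (auto simp: gauss_mgf[OF sp] assms)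
  also have "\<dots> = ennreal (exp (s * (cmod c)\<^sup>2 / 4))"
    using assms by (simp add: ennreal_mult[symmetric] exp_add[symmetric] cmod_power2 field_simps)
  finally show ?thesis .
qed

lemma cg_exp_sq:
  assumes "a < 1"
  shows "(\<integral>\<^sup>+z. ennreal (exp (a * (cmod z)\<^sup>2)) \<partial>complex_gaussian 1) = ennreal (1 / (1 - a))"
proof -
  have sp: "sqrt (1/2) > (0::real)" by simp
  have a2: "2 * a * (sqrt (1/2))\<^sup>2 < 1" using assms by simp
  have "(\<integral>\<^sup>+z. ennreal (exp (a * (cmod z)\<^sup>2)) \<partial>complex_gaussian 1)
      = (\<integral>\<^sup>+z. ennreal (exp (a * (Re z)\<^sup>2) * exp (a * (Im z)\<^sup>2)) \<partial>complex_gaussian 1)"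
    by (intro nn_integral_cong) (simp add: exp_add[symmetric] cmod_power2 algebra_simps)
  also have "\<dots> = ennreal (1 / sqrt (1 - 2 * a * (sqrt (1/2))\<^sup>2)) * ennreal (1 / sqrt (1 - 2 * a * (sqrt (1/2))\<^sup>2))"
    by (subst cg_prod) (auto simp: gauss_sq_mgf[OF sp a2])
  also have "\<dots> = ennreal (1 / (1 - a))"
    using assms by (simp add: ennreal_mult[symmetric])
  finally show ?thesis .
qed

lemma sets_cg[measurable_cong, simp]: "sets (complex_gaussian s) = sets borel"
  by (simp add: complex_gaussian_def)

lemma space_cg[simp]: "space (complex_gaussian s) = UNIV"
  by (simp add: complex_gaussian_def)

lemma prob_space_cg: assumes "s > 0" shows "prob_space (complex_gaussian s)"
proof -
  define N where "N = density lborel (normal_density 0 (sqrt (s/2)))"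
  have sp: "sqrt (s/2) > 0" using assms by simp
  interpret N: prob_space N unfolding N_def by (rule prob_space_normal_density[OF sp])
  interpret P: pair_prob_space N N by unfold_locales
  have [measurable_cong]: "sets N = sets borel" by (simp add: N_def)
  show ?thesis unfolding complex_gaussian_def N_def[symmetric]
    by (rule P.prob_space_distr) measurable
qed

lemma prod_grid:
  fixes g :: "nat \<times> nat \<Rightarrow> real"
  assumes "S \<subseteq> {0..<n}"
  shows "(\<Prod>p\<in>{0..<M}\<times>{0..<n}. (if snd p \<in> S then g p else 1)) = (\<Prod>i\<in>S. \<Prod>j<M. g (j, i))"
proof -
  have "(\<Prod>p\<in>{0..<M}\<times>{0..<n}. (if snd p \<in> S then g p else 1))
      = (\<Prod>i\<in>{0..<n}. \<Prod>j\<in>{0..<M}. (if i \<in> S then g (j,i) else 1))"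
    by (subst prod.swap) (auto simp: prod.cartesian_product intro!: prod.cong)
  also have "\<dots> = (\<Prod>i\<in>{0..<n}. (if i \<in> S then (\<Prod>j\<in>{0..<M}. g (j,i)) else 1))"
    by (intro prod.cong) auto
  also have "\<dots> = (\<Prod>i\<in>S. (\<Prod>j\<in>{0..<M}. g (j,i)))"
    using assms by (simp add: prod.If_cases Int_absorb1)
  finally show ?thesis by (simp add: lessThan_atLeast0)
qed

lemma borel_measurable_cnj[measurable]:
  assumes [measurable]: "f \<in> borel_measurable M"
  shows "(\<lambda>x. cnj (f x)) \<in> borel_measurable M"
proof -
  have "(\<lambda>x. cnj (f x)) = (\<lambda>x. Complex (Re (f x)) (- Im (f x)))" by (auto simp: complex_eq_iff)
  then show ?thesis by simp
qed

lemma meas_col_inner[measurable]: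
  assumes "i < n"
  shows "(\<lambda>\<Phi>. col_inner M y \<Phi> i) \<in> borel_measurable (gaussian_matrix M n)"
proof -
  have [measurable]: "j \<in> {..<M} \<Longrightarrow> (\<lambda>\<Phi>. \<Phi> (j, i)) \<in> borel_measurable (gaussian_matrix M n)" for j
  proof -
    assume j: "j \<in> {..<M}"
    have "(\<lambda>\<Phi>. \<Phi> (j, i)) \<in> measurable (gaussian_matrix M n) (complex_gaussian (1/real M))"
      unfolding gaussian_matrix_def using assms j by (intro measurable_component_singleton) auto
    then show ?thesis by (subst (asm) measurable_cong_sets[OF refl sets_cg])
  qed
  show ?thesis unfolding col_inner_def by measurable
qed

lemma comp_meas:
  assumes "j < M" "i < n"
  shows "(\<lambda>\<Phi>. \<Phi> (j, i)) \<in> borel_measurable (gaussian_matrix M n)"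
proof -
  have "(\<lambda>\<Phi>. \<Phi> (j, i)) \<in> measurable (gaussian_matrix M n) (complex_gaussian (1/real M))"
    unfolding gaussian_matrix_def using assms by (intro measurable_component_singleton) auto
  then show ?thesis by (subst (asm) measurable_cong_sets[OF refl sets_cg])
qed

lemma hs_identity:
  assumes "lam \<ge> 0"
  shows "(\<integral>\<^sup>+w. ennreal (exp (Re (complex_of_real (2 * sqrt lam) * z * cnj w))) \<partial>complex_gaussian 1)
     = ennreal (exp (lam * (cmod z)\<^sup>2))"
proof -
  have "(cmod (complex_of_real (2 * sqrt lam) * z))\<^sup>2 = 4 * lam * (cmod z)\<^sup>2"
    using assms by (simp add: norm_mult power_mult_distrib)
  then show ?thesis by (subst cg_exp_lin) auto
qed

lemma mgf_matrix:
  fixes y :: "nat \<Rightarrow> complex" and S :: "nat set" and lam :: real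
  assumes M0: "M > 0" and S: "S \<subseteq> {0..<n}" and lam: "lam \<ge> 0"
    and rho: "lam * (\<Sum>j<M. (cmod (y j))\<^sup>2) / M < 1"
  shows "(\<integral>\<^sup>+\<Phi>. ennreal (exp (lam * (\<Sum>i\<in>S. (cmod (col_inner M y \<Phi> i))\<^sup>2))) \<partial>gaussian_matrix M n)
       = ennreal ((1 / (1 - lam * (\<Sum>j<M. (cmod (y j))\<^sup>2) / M)) ^ card S)"
proof -
  define \<rho> where "\<rho> = (\<Sum>j<M. (cmod (y j))\<^sup>2)"
  define r where "r = complex_of_real (2 * sqrt lam)"
  define GM where "GM = gaussian_matrix M n"
  define P where "P = PiM S (\<lambda>_. complex_gaussian 1)"
  have finS: "finite S" using S finite_subset by blast
  have ps1: "prob_space (complex_gaussian 1)" by (rule prob_space_cg) simp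
  have psM: "prob_space (complex_gaussian (1 / real M))" by (rule prob_space_cg) (use M0 in simp)
  interpret PS1: product_sigma_finite "\<lambda>_::nat. complex_gaussian 1"
    by (simp add: product_sigma_finite_def prob_space_imp_sigma_finite ps1)
  interpret PSM: product_sigma_finite "\<lambda>_::nat\<times>nat. complex_gaussian (1 / real M)"
    by (simp add: product_sigma_finite_def prob_space_imp_sigma_finite psM)
  have psGM: "prob_space GM" unfolding GM_def gaussian_matrix_def by (rule prob_space_PiM) (rule psM)
  have psP: "prob_space P" unfolding P_def by (rule prob_space_PiM) (rule ps1)
  interpret pair: pair_sigma_finite GM P
    by (simp add: pair_sigma_finite_def prob_space_imp_sigma_finite psGM psP)
  define F where "F = (\<lambda>\<Phi> W. \<Prod>i\<in>S. ennreal (exp (Re (r * col_inner M y \<Phi> i * cnj (W i)))))"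
  have A: "ennreal (exp (lam * (\<Sum>i\<in>S. (cmod (col_inner M y \<Phi> i))\<^sup>2))) = (\<integral>\<^sup>+W. F \<Phi> W \<partial>P)" for \<Phi>
  proof -
    have "(\<integral>\<^sup>+W. F \<Phi> W \<partial>P) = (\<Prod>i\<in>S. \<integral>\<^sup>+w. ennreal (exp (Re (r * col_inner M y \<Phi> i * cnj w))) \<partial>complex_gaussian 1)"
      unfolding F_def P_def by (rule PS1.product_nn_integral_prod) (auto simp: finS)
    also have "\<dots> = (\<Prod>i\<in>S. ennreal (exp (lam * (cmod (col_inner M y \<Phi> i))\<^sup>2)))"
      unfolding r_def using lam by (intro prod.cong refl hs_identity)
    also have "\<dots> = ennreal (\<Prod>i\<in>S. exp (lam * (cmod (col_inner M y \<Phi> i))\<^sup>2))"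
      by (rule prod_ennreal) simp
    also have "\<dots> = ennreal (exp (lam * (\<Sum>i\<in>S. (cmod (col_inner M y \<Phi> i))\<^sup>2)))"
      by (simp add: exp_sum finS sum_distrib_left)
    finally show ?thesis by simp
  qed
  have mF: "case_prod F \<in> borel_measurable (GM \<Otimes>\<^sub>M P)"
  proof -
    have m1[measurable]: "i \<in> S \<Longrightarrow> (\<lambda>x. col_inner M y (fst x) i) \<in> borel_measurable (GM \<Otimes>\<^sub>M P)" for i
      using S unfolding GM_def by (intro measurable_compose[OF measurable_fst meas_col_inner]) auto
    have m2[measurable]: "i \<in> S \<Longrightarrow> (\<lambda>x. snd x i) \<in> borel_measurable (GM \<Otimes>\<^sub>M P)" for i
    proof -
      assume i: "i \<in> S"
      have "(\<lambda>W. W i) \<in> measurable P (complex_gaussian 1)"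
        unfolding P_def using i by (intro measurable_component_singleton)
      then have "(\<lambda>W. W i) \<in> borel_measurable P" by (subst (asm) measurable_cong_sets[OF refl sets_cg])
      then show ?thesis by (intro measurable_compose[OF measurable_snd])
    qed
    show ?thesis unfolding F_def case_prod_beta'
      by (intro borel_measurable_prod_ennreal) measurable
  qed
  have C: "(\<integral>\<^sup>+\<Phi>. F \<Phi> W \<partial>GM) = ennreal (\<Prod>i\<in>S. exp (lam * \<rho> / M * (cmod (W i))\<^sup>2))" for W
  proof -
    define I where "I = {0..<M} \<times> {0..<n}"
    define h where "h = (\<lambda>p \<phi>. ennreal (if snd p \<in> S then exp (Re ((r * y (fst p) * cnj (W (snd p))) * cnj \<phi>)) else 1))"
    have C1: "F \<Phi> W = (\<Prod>p\<in>I. h p (\<Phi> p))" for \<Phi>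
    proof -
      define g where "g = (\<lambda>p. exp (Re ((r * y (fst p) * cnj (W (snd p))) * cnj (\<Phi> p))))"
      have e1: "exp (Re (r * col_inner M y \<Phi> i * cnj (W i))) = (\<Prod>j<M. g (j, i))" for i
      proof -
        have "r * col_inner M y \<Phi> i * cnj (W i) = (\<Sum>j<M. (r * y j * cnj (W i)) * cnj (\<Phi> (j, i)))"
          unfolding col_inner_def by (simp add: sum_distrib_left sum_distrib_right mult_ac)
        then show ?thesis unfolding g_def by (simp add: Re_sum exp_sum)
      qed
      have "F \<Phi> W = ennreal (\<Prod>i\<in>S. \<Prod>j<M. g (j, i))"
        unfolding F_def e1 by (rule prod_ennreal) (simp add: g_def prod_nonneg)
      also have "\<dots> = ennreal (\<Prod>p\<in>I. (if snd p \<in> S then g p else 1))"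
        unfolding I_def by (simp add: prod_grid[OF S])
      also have "\<dots> = (\<Prod>p\<in>I. h p (\<Phi> p))"
        unfolding h_def g_def by (subst prod_ennreal[symmetric]) (auto intro!: prod.cong)
      finally show ?thesis .
    qed
    have "(\<integral>\<^sup>+\<Phi>. F \<Phi> W \<partial>GM) = (\<integral>\<^sup>+\<Phi>. (\<Prod>p\<in>I. h p (\<Phi> p)) \<partial>GM)"
      by (simp add: C1)
    also have "\<dots> = (\<Prod>p\<in>I. \<integral>\<^sup>+\<phi>. h p \<phi> \<partial>complex_gaussian (1 / real M))"
      unfolding GM_def gaussian_matrix_def I_def
      by (rule PSM.product_nn_integral_prod) (auto simp: h_def)
    also have "\<dots> = (\<Prod>p\<in>I. ennreal (if snd p \<in> S then exp (lam * (cmod (y (fst p)))\<^sup>2 * (cmod (W (snd p)))\<^sup>2 / M) else 1))"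
    proof (intro prod.cong refl)
      fix p assume "p \<in> I"
      show "(\<integral>\<^sup>+\<phi>. h p \<phi> \<partial>complex_gaussian (1 / real M)) = ennreal (if snd p \<in> S then exp (lam * (cmod (y (fst p)))\<^sup>2 * (cmod (W (snd p)))\<^sup>2 / M) else 1)"
      proof (cases "snd p \<in> S")
        case True
        have "(cmod (r * y (fst p) * cnj (W (snd p))))\<^sup>2 = 4 * lam * (cmod (y (fst p)))\<^sup>2 * (cmod (W (snd p)))\<^sup>2"
          unfolding r_def using lam by (simp add: norm_mult power_mult_distrib)
        moreover have "(\<integral>\<^sup>+\<phi>. h p \<phi> \<partial>complex_gaussian (1 / real M))
            = (\<integral>\<^sup>+\<phi>. ennreal (exp (Re ((r * y (fst p) * cnj (W (snd p))) * cnj \<phi>))) \<partial>complex_gaussian (1 / real M))"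
          unfolding h_def using True by simp
        moreover have "\<dots> = ennreal (exp (1 / real M * (cmod (r * y (fst p) * cnj (W (snd p))))\<^sup>2 / 4))"
          by (rule cg_exp_lin) (use M0 in simp)
        ultimately show ?thesis using True by simp
      next
        case False
        then show ?thesis unfolding h_def using prob_space.emeasure_space_1[OF psM] by simp
      qed
    qed
    also have "\<dots> = ennreal (\<Prod>p\<in>I. (if snd p \<in> S then exp (lam * (cmod (y (fst p)))\<^sup>2 * (cmod (W (snd p)))\<^sup>2 / M) else 1))"
      by (rule prod_ennreal) simp
    also have "\<dots> = ennreal (\<Prod>i\<in>S. \<Prod>j<M. exp (lam * (cmod (y j))\<^sup>2 * (cmod (W i))\<^sup>2 / M))"
      unfolding I_def by (subst prod_grid[OF S]) simp
    also have "\<dots> = ennreal (\<Prod>i\<in>S. exp (lam * \<rho> / M * (cmod (W i))\<^sup>2))"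
      unfolding \<rho>_def by (simp add: exp_sum[symmetric] sum_divide_distrib[symmetric] sum_distrib_left[symmetric] sum_distrib_right[symmetric] mult_ac)
    finally show ?thesis .
  qed
  have D: "(\<integral>\<^sup>+W. ennreal (\<Prod>i\<in>S. exp (lam * \<rho> / M * (cmod (W i))\<^sup>2)) \<partial>P)
      = ennreal ((1 / (1 - lam * \<rho> / M)) ^ card S)"
  proof -
    have "(\<integral>\<^sup>+W. ennreal (\<Prod>i\<in>S. exp (lam * \<rho> / M * (cmod (W i))\<^sup>2)) \<partial>P)
       = (\<integral>\<^sup>+W. (\<Prod>i\<in>S. ennreal (exp (lam * \<rho> / M * (cmod (W i))\<^sup>2))) \<partial>P)"
      by (intro nn_integral_cong prod_ennreal[symmetric]) simp
    also have "\<dots> = (\<Prod>i\<in>S. \<integral>\<^sup>+w. ennreal (exp (lam * \<rho> / M * (cmod w)\<^sup>2)) \<partial>complex_gaussian 1)"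
      unfolding P_def by (rule PS1.product_nn_integral_prod) (auto simp: finS)
    also have "\<dots> = (\<Prod>i\<in>S. ennreal (1 / (1 - lam * \<rho> / M)))"
      using rho unfolding \<rho>_def by (intro prod.cong refl cg_exp_sq) simp
    also have "\<dots> = ennreal ((1 / (1 - lam * \<rho> / M)) ^ card S)"
      using rho unfolding \<rho>_def by (simp add: prod_ennreal ennreal_power)
    finally show ?thesis .
  qed
  have "(\<integral>\<^sup>+\<Phi>. ennreal (exp (lam * (\<Sum>i\<in>S. (cmod (col_inner M y \<Phi> i))\<^sup>2))) \<partial>GM)
      = (\<integral>\<^sup>+\<Phi>. (\<integral>\<^sup>+W. F \<Phi> W \<partial>P) \<partial>GM)" by (simp add: A)
  also have "\<dots> = (\<integral>\<^sup>+W. (\<integral>\<^sup>+\<Phi>. F \<Phi> W \<partial>GM) \<partial>P)"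
    by (rule pair.Fubini'[symmetric]) (rule mF)
  also have "\<dots> = ennreal ((1 / (1 - lam * \<rho> / M)) ^ card S)"
    unfolding C by (rule D)
  finally show ?thesis unfolding GM_def \<rho>_def .
qed

lemma meas_sumsq[measurable]:
  assumes "S \<subseteq> {0..<n}"
  shows "(\<lambda>\<Phi>. \<Sum>i\<in>S. (cmod (col_inner M y \<Phi> i))\<^sup>2) \<in> borel_measurable (gaussian_matrix M n)"
  using assms by (intro borel_measurable_sum) (auto intro!: borel_measurable_power borel_measurable_norm meas_col_inner)

lemma tail_matrix:
  fixes y :: "nat \<Rightarrow> complex" and S :: "nat set" and lam :: real
  assumes M0: "M > 0" and S: "S \<subseteq> {0..<n}" and lam: "lam > 0"
    and rho: "lam * (\<Sum>j<M. (cmod (y j))\<^sup>2) / M < 1"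
  shows "emeasure (gaussian_matrix M n) {\<Phi> \<in> space (gaussian_matrix M n). t \<le> (\<Sum>i\<in>S. (cmod (col_inner M y \<Phi> i))\<^sup>2)}
     \<le> ennreal (exp (- lam * t) * (1 / (1 - lam * (\<Sum>j<M. (cmod (y j))\<^sup>2) / M)) ^ card S)"
proof -
  define GM where "GM = gaussian_matrix M n"
  define X where "X = (\<lambda>\<Phi>. \<Sum>i\<in>S. (cmod (col_inner M y \<Phi> i))\<^sup>2)"
  have [measurable]: "X \<in> borel_measurable GM" unfolding X_def GM_def using S by measurable
  have eq: "{\<Phi> \<in> space GM. t \<le> X \<Phi>} = {\<Phi> \<in> space GM. 1 \<le> ennreal (exp (- lam * t)) * ennreal (exp (lam * X \<Phi>))}"
  proof -
    have "(t \<le> X \<Phi>) \<longleftrightarrow> 1 \<le> ennreal (exp (- lam * t)) * ennreal (exp (lam * X \<Phi>))" for \<Phi>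
    proof -
      have "ennreal (exp (- lam * t)) * ennreal (exp (lam * X \<Phi>)) = ennreal (exp (lam * (X \<Phi> - t)))"
        by (simp add: ennreal_mult[symmetric] mult_exp_exp algebra_simps)
      moreover have "(1 \<le> exp (lam * (X \<Phi> - t))) \<longleftrightarrow> t \<le> X \<Phi>"
        using lam by (simp add: zero_le_mult_iff)
      ultimately show ?thesis by simp
    qed
    then show ?thesis by blast
  qed
  have "emeasure GM {\<Phi> \<in> space GM. t \<le> X \<Phi>}
      \<le> ennreal (exp (- lam * t)) * (\<integral>\<^sup>+\<Phi>. ennreal (exp (lam * X \<Phi>)) * indicator (space GM) \<Phi> \<partial>GM)"
    unfolding eq by (rule nn_integral_Markov_inequality) auto
  also have "(\<integral>\<^sup>+\<Phi>. ennreal (exp (lam * X \<Phi>)) * indicator (space GM) \<Phi> \<partial>GM) = (\<integral>\<^sup>+\<Phi>. ennreal (exp (lam * X \<Phi>)) \<partial>GM)"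
    by (intro nn_integral_cong) auto
  also have "\<dots> = ennreal ((1 / (1 - lam * (\<Sum>j<M. (cmod (y j))\<^sup>2) / M)) ^ card S)"
    unfolding GM_def X_def using assms by (intro mgf_matrix) auto
  finally have *: "emeasure GM {\<Phi> \<in> space GM. t \<le> X \<Phi>} \<le> ennreal (exp (- lam * t)) * ennreal ((1 / (1 - lam * (\<Sum>j<M. (cmod (y j))\<^sup>2) / M)) ^ card S)" .
  have pos: "0 \<le> (1 / (1 - lam * (\<Sum>j<M. (cmod (y j))\<^sup>2) / M)) ^ card S" using rho by simp
  show ?thesis using * unfolding GM_def X_def by (subst ennreal_mult) (use pos in auto)
qed



definition nrm :: "nat \<Rightarrow> (nat \<Rightarrow> complex) \<Rightarrow> real" where
  "nrm M x = L2_set (\<lambda>j. cmod (x j)) {..<M}"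

definition AS :: "nat \<Rightarrow> nat set \<Rightarrow> (nat \<times> nat \<Rightarrow> complex) \<Rightarrow> (nat \<Rightarrow> complex) \<Rightarrow> real" where
  "AS M S \<Phi> x = L2_set (\<lambda>i. cmod (col_inner M x \<Phi> i)) S"

lemma col_inner_diff: "col_inner M (\<lambda>j. x j - y j) \<Phi> i = col_inner M x \<Phi> i - col_inner M y \<Phi> i"
  unfolding col_inner_def by (simp add: sum_subtractf[symmetric] algebra_simps)

lemma col_inner_scale: "col_inner M (\<lambda>j. c * x j) \<Phi> i = c * col_inner M x \<Phi> i"
  unfolding col_inner_def by (simp add: sum_distrib_left mult_ac)

lemma col_inner_CS: "cmod (col_inner M x \<Phi> i) \<le> nrm M x * L2_set (\<lambda>j. cmod (\<Phi> (j, i))) {..<M}"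
proof -
  have "cmod (col_inner M x \<Phi> i) \<le> (\<Sum>j<M. cmod (x j * cnj (\<Phi> (j, i))))"
    unfolding col_inner_def by (rule norm_sum)
  also have "\<dots> = (\<Sum>j<M. \<bar>cmod (x j)\<bar> * \<bar>cmod (\<Phi> (j, i))\<bar>)" by (simp add: norm_mult)
  also have "\<dots> \<le> nrm M x * L2_set (\<lambda>j. cmod (\<Phi> (j, i))) {..<M}"
    unfolding nrm_def by (rule L2_set_mult_ineq)
  finally show ?thesis .
qed

lemma AS_triangle: "AS M S \<Phi> x \<le> AS M S \<Phi> y + AS M S \<Phi> (\<lambda>j. x j - y j)"
proof -
  have "AS M S \<Phi> x \<le> L2_set (\<lambda>i. cmod (col_inner M y \<Phi> i) + cmod (col_inner M (\<lambda>j. x j - y j) \<Phi> i)) S"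
    unfolding AS_def
  proof (rule L2_set_mono)
    fix i
    have "col_inner M x \<Phi> i = col_inner M y \<Phi> i + col_inner M (\<lambda>j. x j - y j) \<Phi> i"
      by (simp add: col_inner_diff)
    then show "cmod (col_inner M x \<Phi> i) \<le> cmod (col_inner M y \<Phi> i) + cmod (col_inner M (\<lambda>j. x j - y j) \<Phi> i)"
      by (metis norm_triangle_ineq)
  qed simp
  also have "\<dots> \<le> AS M S \<Phi> y + AS M S \<Phi> (\<lambda>j. x j - y j)"
    unfolding AS_def by (rule L2_set_triangle_ineq)
  finally show ?thesis .
qed

lemma AS_scale: "c \<ge> 0 \<Longrightarrow> AS M S \<Phi> (\<lambda>j. complex_of_real c * x j) = c * AS M S \<Phi> x"
  unfolding AS_def col_inner_scale by (simp add: L2_set_right_distrib norm_mult)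

lemma nrm_scale: "c \<ge> 0 \<Longrightarrow> nrm M (\<lambda>j. complex_of_real c * x j) = c * nrm M x"
  unfolding nrm_def by (simp add: L2_set_right_distrib norm_mult)

lemma AS_bound: "AS M S \<Phi> x \<le> nrm M x * L2_set (\<lambda>i. L2_set (\<lambda>j. cmod (\<Phi> (j, i))) {..<M}) S"
  unfolding AS_def
  by (subst L2_set_right_distrib) (auto intro!: L2_set_mono col_inner_CS[unfolded nrm_def] simp: nrm_def)

lemma AS_nonneg: "AS M S \<Phi> x \<ge> 0" unfolding AS_def by simp
lemma nrm_nonneg: "nrm M x \<ge> 0" unfolding nrm_def by simp

lemma net_reduce:
  assumes eps: "0 \<le> \<epsilon>" "\<epsilon> < 1"
    and Nt: "\<And>x. nrm M x = 1 \<Longrightarrow> \<exists>y\<in>N. nrm M (\<lambda>j. x j - y j) \<le> \<epsilon>"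
    and x: "nrm M x = 1" and ax: "AS M S \<Phi> x > a"
  shows "\<exists>y\<in>N. AS M S \<Phi> y > (1 - \<epsilon>) * a"
proof (rule ccontr)
  assume "\<not> ?thesis"
  then have le: "\<And>y. y \<in> N \<Longrightarrow> AS M S \<Phi> y \<le> (1 - \<epsilon>) * a" by (simp add: not_less)
  define K where "K = L2_set (\<lambda>i. L2_set (\<lambda>j. cmod (\<Phi> (j, i))) {..<M}) S"
  define T where "T = (\<lambda>u. AS M S \<Phi> u) ` {u. nrm M u = 1}"
  have bdd: "bdd_above T" unfolding T_def bdd_above_def
    using AS_bound[of M S \<Phi>] by (intro exI[of _ K]) (auto simp: K_def[symmetric], metis mult_1)
  have ne: "T \<noteq> {}" using x unfolding T_def by auto
  define Ns where "Ns = Sup T"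
  have inT: "nrm M u = 1 \<Longrightarrow> AS M S \<Phi> u \<le> Ns" for u
    unfolding Ns_def by (rule cSup_upper[OF _ bdd]) (auto simp: T_def)
  have Ns0: "Ns \<ge> 0" using inT[OF x] AS_nonneg[of M S \<Phi> x] by linarith
  have gen: "AS M S \<Phi> v \<le> nrm M v * Ns" for v
  proof (cases "nrm M v = 0")
    case True
    then show ?thesis using AS_bound[of M S \<Phi> v] AS_nonneg[of M S \<Phi> v] by simp
  next
    case False
    define d where "d = nrm M v"
    have d0: "d > 0" using False nrm_nonneg[of M v] unfolding d_def by simp
    define w where "w = (\<lambda>j. complex_of_real (1/d) * v j)"
    have "nrm M w = 1" unfolding w_def using d0 by (subst nrm_scale) (auto simp: d_def)
    then have "AS M S \<Phi> w \<le> Ns" by (rule inT)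
    moreover have "AS M S \<Phi> v = d * AS M S \<Phi> w"
    proof -
      have "v = (\<lambda>j. complex_of_real d * w j)" using d0 unfolding w_def by auto
      then have "AS M S \<Phi> v = AS M S \<Phi> (\<lambda>j. complex_of_real d * w j)" by simp
      then show ?thesis using d0 by (simp add: AS_scale)
    qed
    ultimately show ?thesis using d0 unfolding d_def by (simp add: mult_left_mono)
  qed
  have "Ns \<le> (1 - \<epsilon>) * a + \<epsilon> * Ns"
    unfolding Ns_def
  proof (rule cSup_least[OF ne])
    fix t assume "t \<in> T"
    then obtain u where u: "nrm M u = 1" "t = AS M S \<Phi> u" unfolding T_def by auto
    obtain y where y: "y \<in> N" "nrm M (\<lambda>j. u j - y j) \<le> \<epsilon>" using Nt[OF u(1)] by auto
    have "t \<le> AS M S \<Phi> y + AS M S \<Phi> (\<lambda>j. u j - y j)" using u AS_triangle by simp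
    also have "\<dots> \<le> (1 - \<epsilon>) * a + \<epsilon> * Ns"
      using le[OF y(1)] gen[of "\<lambda>j. u j - y j"] y(2) Ns0 mult_right_mono[OF y(2) Ns0] by linarith
    finally show "t \<le> (1 - \<epsilon>) * a + \<epsilon> * Sup T" unfolding Ns_def .
  qed
  then have "(1 - \<epsilon>) * Ns \<le> (1 - \<epsilon>) * a" by (simp add: algebra_simps)
  then have "Ns \<le> a" using eps by simp
  then show False using inT[OF x] ax by simp
qed

definition rnd :: "nat \<Rightarrow> nat \<Rightarrow> (nat \<Rightarrow> complex) \<Rightarrow> (nat \<Rightarrow> complex)" where
  "rnd M L x = (\<lambda>j. if j < M then Complex (of_int \<lfloor>Re (x j) * L\<rfloor> / L) (of_int \<lfloor>Im (x j) * L\<rfloor> / L) else 0)"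

lemma nrm_sq: "(nrm M x)\<^sup>2 = (\<Sum>j<M. (cmod (x j))\<^sup>2)"
  unfolding nrm_def L2_set_def by (simp add: sum_nonneg)

lemma floor_err: fixes t :: real assumes "L > (0::nat)" shows "\<bar>t - of_int \<lfloor>t * L\<rfloor> / L\<bar> \<le> 1 / L"
proof -
  have f1: "of_int \<lfloor>t * L\<rfloor> \<le> t * L" "t * L < of_int \<lfloor>t * L\<rfloor> + 1" by linarith+
  have e: "t - of_int \<lfloor>t * L\<rfloor> / L = (t * L - of_int \<lfloor>t * L\<rfloor>) / L"
    using assms by (simp add: field_simps)
  have "0 \<le> t - of_int \<lfloor>t * L\<rfloor> / L" "t - of_int \<lfloor>t * L\<rfloor> / L \<le> 1 / L"
  proof -
    have n0: "0 \<le> t * L - of_int \<lfloor>t * L\<rfloor>" "t * L - of_int \<lfloor>t * L\<rfloor> \<le> 1" using f1 by linarith+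
    show "0 \<le> t - of_int \<lfloor>t * L\<rfloor> / L" unfolding e using n0 by simp
    show "t - of_int \<lfloor>t * L\<rfloor> / L \<le> 1 / L" unfolding e using n0 assms by (intro divide_right_mono) auto
  qed
  then show ?thesis by simp
qed

lemma rnd_err:
  assumes "L > 0"
  shows "(nrm M (\<lambda>j. x j - rnd M L x j))\<^sup>2 \<le> 2 * M / (real L)\<^sup>2"
proof -
  have "(cmod (x j - rnd M L x j))\<^sup>2 \<le> 2 / (real L)\<^sup>2" if "j < M" for j
  proof -
    have a: "\<bar>Re (x j - rnd M L x j)\<bar> \<le> 1 / L" using that floor_err[OF assms] by (simp add: rnd_def)
    have b: "\<bar>Im (x j - rnd M L x j)\<bar> \<le> 1 / L" using that floor_err[OF assms] by (simp add: rnd_def)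
    have "(Re (x j - rnd M L x j))\<^sup>2 \<le> (1 / L)\<^sup>2" using power_mono[OF a abs_ge_zero, of 2] by simp
    moreover have "(Im (x j - rnd M L x j))\<^sup>2 \<le> (1 / L)\<^sup>2" using power_mono[OF b abs_ge_zero, of 2] by simp
    ultimately show ?thesis by (simp add: cmod_power2 power_divide)
  qed
  then have "(\<Sum>j<M. (cmod (x j - rnd M L x j))\<^sup>2) \<le> (\<Sum>j<M. 2 / (real L)\<^sup>2)"
    by (intro sum_mono) auto
  then show ?thesis by (simp add: nrm_sq mult.commute)
qed

lemma unit_coord: assumes "nrm M x = 1" "j < M" shows "\<bar>Re (x j)\<bar> \<le> 1" "\<bar>Im (x j)\<bar> \<le> 1"
proof -
  have "cmod (x j) \<le> nrm M x" unfolding nrm_def using assms(2) by (intro member_le_L2_set) auto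
  then show "\<bar>Re (x j)\<bar> \<le> 1" "\<bar>Im (x j)\<bar> \<le> 1" using assms abs_Re_le_cmod abs_Im_le_cmod
    by (metis order.trans)+
qed

lemma floor_range: fixes t :: real assumes "\<bar>t\<bar> \<le> 1" "L > (0::nat)" shows "\<lfloor>t * L\<rfloor> \<in> {- int L..int L}"
proof -
  have "-1 * real L \<le> t * L" by (rule mult_right_mono) (use assms in auto)
  moreover have "t * L \<le> 1 * real L" by (rule mult_right_mono) (use assms in auto)
  ultimately have "- real L \<le> t * L" "t * L \<le> real L" by auto
  then show ?thesis by (auto simp: le_floor_iff floor_le_iff)
qed

lemma rnd_card:
  assumes L: "L > 0"
  shows "finite (rnd M L ` {x. nrm M x = 1}) \<and> card (rnd M L ` {x. nrm M x = 1}) \<le> (2 * L + 1) ^ (2 * M)"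
proof -
  define Gr where "Gr = (\<lambda>(a, b). Complex (of_int a / L) (of_int b / L)) ` ({- int L..int L} \<times> {- int L..int L})"
  define ext where "ext = (\<lambda>f::nat \<Rightarrow> complex. \<lambda>j. if j < M then f j else 0)"
  have fG: "finite Gr" unfolding Gr_def by simp
  have cG: "card Gr \<le> (2 * L + 1)\<^sup>2"
  proof -
    have "card Gr \<le> card ({- int L..int L} \<times> {- int L..int L})" unfolding Gr_def by (rule card_image_le) simp
    also have "\<dots> = (2 * L + 1)\<^sup>2"
    proof -
      have "card {- int L..int L} = 2 * L + 1" by simp
      then show ?thesis by (simp add: card_cartesian_product power2_eq_square)
    qed
    finally show ?thesis .
  qed
  have sub: "rnd M L ` {x. nrm M x = 1} \<subseteq> ext ` (PiE {..<M} (\<lambda>_. Gr))"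
  proof
    fix z assume "z \<in> rnd M L ` {x. nrm M x = 1}"
    then obtain x where x: "nrm M x = 1" "z = rnd M L x" by auto
    define f where "f = restrict (\<lambda>j. Complex (of_int \<lfloor>Re (x j) * L\<rfloor> / L) (of_int \<lfloor>Im (x j) * L\<rfloor> / L)) {..<M}"
    have "f \<in> PiE {..<M} (\<lambda>_. Gr)"
      unfolding f_def Gr_def using floor_range[OF unit_coord(1)[OF x(1)] L] floor_range[OF unit_coord(2)[OF x(1)] L]
      by (auto intro!: image_eqI[where x="(\<lfloor>Re (x _) * L\<rfloor>, \<lfloor>Im (x _) * L\<rfloor>)"])
    moreover have "z = ext f" unfolding x(2) ext_def f_def rnd_def by auto
    ultimately show "z \<in> ext ` (PiE {..<M} (\<lambda>_. Gr))" by blast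
  qed
  have fP: "finite (PiE {..<M} (\<lambda>_. Gr))" using fG by (simp add: finite_PiE)
  have "card (rnd M L ` {x. nrm M x = 1}) \<le> card (ext ` (PiE {..<M} (\<lambda>_. Gr)))"
    by (rule card_mono) (use fP sub in auto)
  also have "\<dots> \<le> card (PiE {..<M} (\<lambda>_. Gr))" by (rule card_image_le[OF fP])
  also have "\<dots> = card Gr ^ M" by (simp add: card_PiE)
  also have "\<dots> \<le> ((2 * L + 1)\<^sup>2) ^ M" by (rule power_mono[OF cG]) simp
  also have "\<dots> = (2 * L + 1) ^ (2 * M)" by (simp add: power_mult)
  finally show ?thesis using finite_subset[OF sub] fP by auto
qed

lemma nrm_eq_1: "nrm M x = 1 \<longleftrightarrow> (\<Sum>j<M. (cmod (x j))\<^sup>2) = 1"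
  unfolding nrm_def L2_set_def by simp

lemma nrm_triangle: "nrm M (\<lambda>j. a j + b j) \<le> nrm M a + nrm M b"
proof -
  have "nrm M (\<lambda>j. a j + b j) \<le> L2_set (\<lambda>j. cmod (a j) + cmod (b j)) {..<M}"
    unfolding nrm_def by (rule L2_set_mono) (auto intro: norm_triangle_ineq)
  also have "\<dots> \<le> nrm M a + nrm M b" unfolding nrm_def by (rule L2_set_triangle_ineq)
  finally show ?thesis .
qed

lemma nrm_scale_abs: "nrm M (\<lambda>j. complex_of_real c * x j) = \<bar>c\<bar> * nrm M x"
  unfolding nrm_def by (simp add: L2_set_right_distrib norm_mult)

definition nz :: "nat \<Rightarrow> (nat \<Rightarrow> complex) \<Rightarrow> (nat \<Rightarrow> complex)" where
  "nz M y = (\<lambda>j. complex_of_real (1 / nrm M y) * y j)"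

lemma nrm_nz: "nrm M y > 0 \<Longrightarrow> nrm M (nz M y) = 1"
  unfolding nz_def nrm_scale_abs by simp

lemma dense_grid:
  assumes x: "nrm M x = 1" and r: "r > 0"
  shows "\<exists>m. \<exists>y\<in>rnd M (Suc m) ` {x. nrm M x = 1}. 0 < nrm M y \<and> nrm M (\<lambda>j. x j - nz M y j) < r"
proof -
  define e0 where "e0 = min (r/2) (1/2)"
  have e0: "e0 > 0" unfolding e0_def using r by simp
  obtain L :: nat where L: "real L > sqrt (2 * M) / e0" using reals_Archimedean2 by blast
  have L0: "L > 0" using L e0 by (metis divide_nonneg_pos not_gr0 of_nat_0 order.strict_iff_not real_sqrt_ge_zero zero_le_mult_iff zero_le_numeral of_nat_0_le_iff)
  have "sqrt (2 * M) < e0 * L" using L e0 by (simp add: field_simps)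
  then have "(sqrt (2 * M))\<^sup>2 < (e0 * L)\<^sup>2" by (intro power_strict_mono) auto
  then have "2 * M < (e0 * L)\<^sup>2" by simp
  then have lt: "2 * M / (real L)\<^sup>2 < e0\<^sup>2" using L0 by (simp add: field_simps power_mult_distrib)
  define y where "y = rnd M L x"
  define e where "e = nrm M (\<lambda>j. x j - y j)"
  have "e\<^sup>2 < e0\<^sup>2" using rnd_err[OF L0, of M x] lt unfolding e_def y_def by linarith
  then have ee: "e < e0" using e0 by (smt (verit) power_mono)
  have e_nn: "e \<ge> 0" unfolding e_def by (rule nrm_nonneg)
  have "nrm M x \<le> nrm M y + e"
    using nrm_triangle[of M y "\<lambda>j. x j - y j"] unfolding e_def by simp
  moreover have "nrm M y \<le> nrm M x + e"
    using nrm_triangle[of M x "\<lambda>j. - (x j - y j)"] unfolding e_def nrm_def by (simp add: norm_minus_commute)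
  ultimately have ny: "\<bar>nrm M y - 1\<bar> \<le> e" using x by simp
  have ny0: "nrm M y > 0" using ny ee e0_def by (simp add: abs_le_iff)
  have "nrm M (\<lambda>j. y j - nz M y j) = nrm M (\<lambda>j. complex_of_real (1 - 1 / nrm M y) * y j)"
    unfolding nz_def by (simp add: algebra_simps)
  also have "\<dots> = \<bar>nrm M y - 1\<bar>" unfolding nrm_scale_abs using ny0
    by (simp add: abs_mult[symmetric] algebra_simps) (simp add: field_simps)
  finally have d2: "nrm M (\<lambda>j. y j - nz M y j) \<le> e" using ny by simp
  have "nrm M (\<lambda>j. x j - nz M y j) \<le> e + nrm M (\<lambda>j. y j - nz M y j)"
    using nrm_triangle[of M "\<lambda>j. x j - y j" "\<lambda>j. y j - nz M y j"] unfolding e_def by simp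
  also have "\<dots> < r" using d2 ee unfolding e0_def by simp
  finally have "nrm M (\<lambda>j. x j - nz M y j) < r" .
  moreover have "y \<in> rnd M (Suc (L - 1)) ` {x. nrm M x = 1}" using x L0 unfolding y_def by simp
  ultimately show ?thesis using ny0 by blast
qed

lemma card_as_sum: fixes n :: nat shows "real (card {i \<in> {0..<n}. Q i}) = (\<Sum>i\<in>{0..<n}. if Q i then 1 else 0)"
proof -
  have "card {i \<in> {0..<n}. Q i} = (\<Sum>i\<in>{i \<in> {0..<n}. Q i}. 1)" by simp
  also have "\<dots> = (\<Sum>i\<in>{0..<n}. if Q i then 1 else 0)" by (rule sum.inter_filter) simp
  finally show ?thesis by (auto simp: of_nat_sum intro!: sum.cong)
qed

lemma pred_count:
  "Measurable.pred (gaussian_matrix M n) (\<lambda>\<Phi>. real (card {i \<in> {0..<n}. (cmod (col_inner M x \<Phi> i))\<^sup>2 > c}) < b)"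
proof -
  have m[measurable]: "(\<lambda>\<Phi>. (\<Sum>i\<in>{0..<n}. if (cmod (col_inner M x \<Phi> i))\<^sup>2 > c then 1 else 0::real)) \<in> borel_measurable (gaussian_matrix M n)"
  proof (intro borel_measurable_sum)
    fix i assume "i \<in> {0..<n}"
    then have [measurable]: "(\<lambda>\<Phi>. col_inner M x \<Phi> i) \<in> borel_measurable (gaussian_matrix M n)"
      by (intro meas_col_inner) auto
    show "(\<lambda>\<Phi>. if (cmod (col_inner M x \<Phi> i))\<^sup>2 > c then 1 else 0::real) \<in> borel_measurable (gaussian_matrix M n)"
      by measurable
  qed
  then show ?thesis unfolding card_as_sum by (rule borel_measurable_pred_less) simp
qed

lemma good_meas:
  assumes c: "c \<ge> 0"
  shows "{\<Phi> \<in> space (gaussian_matrix M n). \<forall>x. (\<Sum>j<M. (cmod (x j))\<^sup>2) = 1 \<longrightarrow>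
      real (card {i \<in> {0..<n}. (cmod (col_inner M x \<Phi> i))\<^sup>2 > c}) < b} \<in> sets (gaussian_matrix M n)"
proof -
  define GM where "GM = gaussian_matrix M n"
  define P where "P = (\<lambda>x \<Phi>. real (card {i \<in> {0..<n}. (cmod (col_inner M x \<Phi> i))\<^sup>2 > c}) < b)"
  define F where "F = (\<lambda>m. rnd M (Suc m) ` {x. nrm M x = 1})"
  have eq: "{\<Phi> \<in> space GM. \<forall>x. (\<Sum>j<M. (cmod (x j))\<^sup>2) = 1 \<longrightarrow> P x \<Phi>}
      = {\<Phi> \<in> space GM. \<forall>m. \<forall>y\<in>F m. 0 < nrm M y \<longrightarrow> P (nz M y) \<Phi>}"
  proof (intro Collect_cong conj_cong refl iffI allI ballI impI)
    fix \<Phi> m y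
    assume "\<forall>x. (\<Sum>j<M. (cmod (x j))\<^sup>2) = 1 \<longrightarrow> P x \<Phi>" "0 < nrm M y"
    then show "P (nz M y) \<Phi>" using nrm_nz nrm_eq_1 by metis
  next
    fix \<Phi> x
    assume H: "\<forall>m. \<forall>y\<in>F m. 0 < nrm M y \<longrightarrow> P (nz M y) \<Phi>" and xs: "(\<Sum>j<M. (cmod (x j))\<^sup>2) = 1"
    have x1: "nrm M x = 1" using xs nrm_eq_1 by blast
    show "P x \<Phi>"
    proof (rule ccontr)
      assume nP: "\<not> P x \<Phi>"
      define T where "T = {i \<in> {0..<n}. (cmod (col_inner M x \<Phi> i))\<^sup>2 > c}"
      define cn where "cn = (\<lambda>i. L2_set (\<lambda>j. cmod (\<Phi> (j, i))) {..<M})"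
      define K where "K = 1 + (\<Sum>i<n. cn i)"
      have K0: "K > 0" unfolding K_def cn_def by (smt (verit) L2_set_nonneg sum_nonneg)
      have cnK: "i < n \<Longrightarrow> cn i \<le> K" for i
        unfolding K_def using member_le_sum[of i "{..<n}" cn] by (auto simp: cn_def)
      define \<eta> where "\<eta> = Min (insert 1 ((\<lambda>i. cmod (col_inner M x \<Phi> i) - sqrt c) ` T))"
      have finT: "finite T" unfolding T_def by simp
      have Tpos: "i \<in> T \<Longrightarrow> cmod (col_inner M x \<Phi> i) - sqrt c > 0" for i
      proof -
        assume "i \<in> T"
        then have "(sqrt c)\<^sup>2 < (cmod (col_inner M x \<Phi> i))\<^sup>2" using c unfolding T_def by simp
        then show ?thesis using power_less_imp_less_base by force
      qed
      have eta0: "\<eta> > 0" unfolding \<eta>_def using finT Tpos by (subst Min_gr_iff) auto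
      have etaT: "i \<in> T \<Longrightarrow> \<eta> \<le> cmod (col_inner M x \<Phi> i) - sqrt c" for i
        unfolding \<eta>_def using finT by (intro Min_le) auto
      obtain m y where y: "y \<in> F m" "0 < nrm M y" "nrm M (\<lambda>j. x j - nz M y j) < \<eta> / K"
        using dense_grid[OF x1, of "\<eta> / K"] eta0 K0 unfolding F_def by auto
      define x' where "x' = nz M y"
      have sub: "T \<subseteq> {i \<in> {0..<n}. (cmod (col_inner M x' \<Phi> i))\<^sup>2 > c}"
      proof
        fix i assume iT: "i \<in> T"
        then have i: "i < n" unfolding T_def by simp
        have "cmod (col_inner M x \<Phi> i - col_inner M x' \<Phi> i) \<le> nrm M (\<lambda>j. x j - x' j) * cn i"
          unfolding col_inner_diff[symmetric] cn_def by (rule col_inner_CS)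
        also have "\<dots> \<le> nrm M (\<lambda>j. x j - x' j) * K" using cnK[OF i] by (intro mult_left_mono nrm_nonneg) auto
        also have "\<dots> < \<eta>" using y(3) K0 unfolding x'_def by (simp add: field_simps)
        finally have "cmod (col_inner M x \<Phi> i - col_inner M x' \<Phi> i) < \<eta>" .
        then have "cmod (col_inner M x' \<Phi> i) > sqrt c"
          using etaT[OF iT] norm_triangle_ineq2[of "col_inner M x \<Phi> i" "col_inner M x' \<Phi> i"] by linarith
        then have "(sqrt c)\<^sup>2 < (cmod (col_inner M x' \<Phi> i))\<^sup>2" using c by (intro power_strict_mono) auto
        then show "i \<in> {i \<in> {0..<n}. (cmod (col_inner M x' \<Phi> i))\<^sup>2 > c}" using c i by simp
      qed
      have "card T \<le> card {i \<in> {0..<n}. (cmod (col_inner M x' \<Phi> i))\<^sup>2 > c}"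
        by (rule card_mono[OF _ sub]) simp
      moreover have "P x' \<Phi>" using H y unfolding x'_def by blast
      ultimately show False using nP unfolding P_def T_def by linarith
    qed
  qed
  have fin: "finite (F m)" for m unfolding F_def using rnd_card[of "Suc m" M] by simp
  have pc: "Measurable.pred GM (P x)" for x unfolding GM_def P_def by (rule pred_count)
  have "Measurable.pred GM (\<lambda>\<Phi>. \<forall>m. \<forall>y\<in>F m. 0 < nrm M y \<longrightarrow> P (nz M y) \<Phi>)"
  proof (rule pred_intros_countable(1), rule pred_intros_finite(3)[OF fin])
    fix m y
    show "Measurable.pred GM (\<lambda>\<Phi>. 0 < nrm M y \<longrightarrow> P (nz M y) \<Phi>)"
      using pc[of "nz M y"] by (cases "0 < nrm M y") (auto simp: pred_def)
  qed
  then show ?thesis using eq unfolding pred_def GM_def P_def by simp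
qed

lemma pow_fact_le_exp:
  fixes x :: real assumes "x \<ge> 0"
  shows "x ^ k / fact k \<le> exp x"
proof -
  have "(\<Sum>n\<in>{k}. x ^ n /\<^sub>R fact n) \<le> (\<Sum>n. x ^ n /\<^sub>R fact n)"
    by (rule sum_le_suminf) (use assms summable_exp_generic[of x] in auto)
  then show ?thesis by (simp add: exp_def divide_inverse mult.commute)
qed

lemma binom_bound:
  assumes "k \<ge> 1"
  shows "real (n choose k) \<le> (exp 1 * n / k) ^ k"
proof -
  have k0: "real k > 0" using assms by simp
  have "real (n choose k) * fact k \<le> real n ^ k"
    using binomial_fact_pow[of n k] by (metis of_nat_fact of_nat_le_iff of_nat_mult of_nat_power)
  then have b: "real (n choose k) \<le> real n ^ k / fact k" by (simp add: field_simps)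
  have "real k ^ k / fact k \<le> exp (real k)" by (rule pow_fact_le_exp) simp
  then have f: "1 / fact k \<le> exp (real k) / real k ^ k" using k0 by (simp add: field_simps)
  have "real n ^ k / fact k = real n ^ k * (1 / fact k)" by simp
  also have "\<dots> \<le> real n ^ k * (exp (real k) / real k ^ k)" by (rule mult_left_mono[OF f]) simp
  also have "\<dots> = (exp 1 * n / k) ^ k" by (simp add: power_divide power_mult_distrib exp_of_nat_mult[symmetric])
  finally show ?thesis using b by linarith
qed

lemma final_arith:
  fixes C :: real and M n k :: nat and cN :: real
  assumes M: "real M \<ge> 50000" and \<beta>: "3 * exp (- C / 8) \<le> 1"
    and kb: "real k \<ge> 3 * exp (- C / 8) * n" and k1: "k \<ge> 1"
    and kM: "real k \<ge> 3 * real M * ln (real M)" and cN: "0 \<le> cN" "cN \<le> (121 * real M) ^ (2 * M)"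
  shows "cN * (real (n choose k) * 2 ^ k * exp (- 3 * real k * C / 8)) \<le> exp (- real M)"
proof -
  have k0: "real k > 0" using k1 by simp
  define q where "q = exp 1 * n / k * 2 * exp (- 3 * C / 8)"
  have q0: "q \<ge> 0" unfolding q_def by simp
  have e3: "exp 1 \<le> (3::real)" by (rule exp_le)
  have "real (n choose k) * 2 ^ k * exp (- 3 * real k * C / 8) \<le> (exp 1 * n / k) ^ k * 2 ^ k * exp (- 3 * C / 8) ^ k"
  proof -
    have "exp (- 3 * real k * C / 8) = exp (- 3 * C / 8) ^ k" by (simp add: exp_of_nat_mult[symmetric] mult_ac)
    then show ?thesis using binom_bound[OF k1, of n] by (simp add: mult_right_mono)
  qed
  also have "\<dots> = q ^ k" unfolding q_def power_mult_distrib ..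
  also have "\<dots> \<le> exp (-1) ^ k"
  proof (rule power_mono[OF _ q0])
    have en: "exp (C / 8) * exp (- C / 8) = 1" by (simp add: exp_minus field_simps)
    have "real n \<le> k * exp (C / 8) / 3"
    proof -
      have "3 * exp (- C / 8) * n * exp (C / 8) \<le> k * exp (C / 8)" using kb by (simp add: mult_right_mono)
      moreover have "3 * exp (- C / 8) * n * exp (C / 8) = 3 * n"
      proof -
        have "3 * exp (- C / 8) * n * exp (C / 8) = 3 * n * (exp (- C / 8) * exp (C / 8))" by (simp only: mult_ac)
        also have "exp (- C / 8) * exp (C / 8) = exp (- C / 8 + C / 8)" by (rule exp_add[symmetric])
        finally have "3 * exp (- C / 8) * n * exp (C / 8) = 3 * n * exp (- C / 8 + C / 8)" .
        then show ?thesis by simp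
      qed
      ultimately show ?thesis by linarith
    qed
    then have nk: "n / k \<le> exp (C / 8) / 3" using k0 by (simp add: field_simps)
    have "q \<le> exp 1 * (exp (C / 8) / 3) * 2 * exp (- 3 * C / 8)"
    proof -
      have "exp 1 * n / k = exp 1 * (n / k)" by simp
      also have "\<dots> \<le> exp 1 * (exp (C / 8) / 3)" using nk by (intro mult_left_mono) auto
      finally show ?thesis unfolding q_def by (intro mult_right_mono) auto
    qed
    also have "\<dots> = 2 * exp 1 / 3 * (exp (- C / 8))\<^sup>2"
      by (simp add: power2_eq_square exp_add[symmetric] field_simps)
    also have "\<dots> \<le> 2 * exp 1 / 3 * (1/3)\<^sup>2"
      using \<beta> by (intro mult_left_mono power_mono) auto
    also have "\<dots> \<le> exp (-1)"
    proof -
      have "exp 1 * exp 1 \<le> (3::real) * 3" using e3 by (intro mult_mono) auto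
      moreover have "(2::real) * exp 1 / 3 * (1/3)\<^sup>2 * exp 1 = 2/27 * (exp 1 * exp 1)" by (simp add: power2_eq_square)
      ultimately have "(2::real) * exp 1 / 3 * (1/3)\<^sup>2 * exp 1 \<le> 1" by linarith
      then show ?thesis by (simp add: exp_minus field_simps)
    qed
    finally show "q \<le> exp (-1)" .
  qed
  also have "\<dots> = exp (- real k)" by (simp add: exp_of_nat_mult[symmetric])
  also have "\<dots> \<le> exp (- (3 * M * ln M))" using kM by simp
  finally have A: "real (n choose k) * 2 ^ k * exp (- 3 * real k * C / 8) \<le> exp (- (3 * M * ln M))" .
  have M0: "real M > 0" using M by simp
  have "cN * (real (n choose k) * 2 ^ k * exp (- 3 * real k * C / 8)) \<le> (121 * real M) ^ (2 * M) * exp (- (3 * M * ln M))"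
    using A cN by (intro mult_mono) auto
  also have "(121 * real M) ^ (2 * M) = exp (2 * M * (ln 121 + ln M))"
  proof -
    have "(121 * real M) ^ (2 * M) = exp (ln (121 * real M)) ^ (2 * M)" using M0 by simp
    also have "\<dots> = exp (real (2 * M) * ln (121 * real M))" by (rule exp_of_nat_mult[symmetric])
    finally show ?thesis using M0 by (simp add: ln_mult)
  qed
  also have "exp (2 * M * (ln 121 + ln M)) * exp (- (3 * M * ln M)) = exp (real M * (2 * ln 121 - ln M))"
    by (simp add: exp_add[symmetric] algebra_simps)
  also have "\<dots> \<le> exp (- real M)"
  proof -
    have l3: "1 \<le> ln (3::real)" using e3 by (subst ln_ge_iff) auto
    have "ln ((121::real) * 121 * 3) \<le> ln (real M)" using M by (subst ln_le_cancel_iff) auto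
    moreover have "ln ((121::real) * 121 * 3) = 2 * ln 121 + ln (3::real)"
    proof -
      have a: "ln ((121::real) * 121) = ln 121 + ln 121" by (rule ln_mult_pos) auto
      have b: "ln ((121::real) * 121 * 3) = ln (121*121) + ln 3" by (rule ln_mult_pos) auto
      show ?thesis using a b by linarith
    qed
    ultimately have "2 * ln 121 - ln M \<le> -1" using l3 by linarith
    then have "real M * (2 * ln 121 - ln M) \<le> real M * (-1)" using M0 by (intro mult_left_mono) auto
    then show ?thesis by simp
  qed
  finally show ?thesis .
qed



lemma main_large:
  fixes C :: real and M n :: nat
  assumes C: "C > 0" and M: "real M \<ge> 50000" and nb: "real n \<ge> exp (C / 8) * real M * ln (real M)"
  shows "measure (gaussian_matrix M n)
         {Phi \<in> space (gaussian_matrix M n).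
            \<forall>x :: nat \<Rightarrow> complex. (\<Sum>j<M. (cmod (x j))\<^sup>2) = 1 \<longrightarrow>
              real (card {i \<in> {0..<n}. (cmod (col_inner M x Phi i))\<^sup>2 > C / real M})
                < 3 * exp (- C / 8) * real n}
       \<ge> 1 - exp (- real M)"
proof -
  define GM where "GM = gaussian_matrix M n"
  define \<beta> where "\<beta> = 3 * exp (- C / 8)"
  define G where "G = {Phi \<in> space GM. \<forall>x :: nat \<Rightarrow> complex. (\<Sum>j<M. (cmod (x j))\<^sup>2) = 1 \<longrightarrow>
              real (card {i \<in> {0..<n}. (cmod (col_inner M x Phi i))\<^sup>2 > C / real M}) < \<beta> * real n}"
  have M0: "M > 0" using M by simp
  have psM: "prob_space (complex_gaussian (1 / real M))" by (rule prob_space_cg) (use M0 in simp)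
  interpret P: prob_space GM unfolding GM_def gaussian_matrix_def by (rule prob_space_PiM) (rule psM)
  have lnM: "ln (real M) > 0" using M by simp
  have n0: "real n > 0" using nb lnM M0 by (smt (verit) exp_gt_zero mult_pos_pos of_nat_0_less_iff)
  have Gs: "G \<in> sets GM" unfolding G_def GM_def \<beta>_def by (rule good_meas) (use C in simp)
  show ?thesis
  proof (cases "\<beta> > 1")
    case True
    have hh: "real (card {i \<in> {0..<n}. (cmod (col_inner M x Phi i))\<^sup>2 > C / real M}) < \<beta> * real n" for Phi x
    proof -
      have "card {i \<in> {0..<n}. (cmod (col_inner M x Phi i))\<^sup>2 > C / real M} \<le> card {0..<n}"
        by (rule card_mono) auto
      then have "real (card {i \<in> {0..<n}. (cmod (col_inner M x Phi i))\<^sup>2 > C / real M}) \<le> real n" by simp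
      also have "real n < \<beta> * real n" using True n0 by simp
      finally show ?thesis .
    qed
    have "G = space GM" unfolding G_def using hh by auto
    then show ?thesis using P.prob_space unfolding GM_def[symmetric] G_def[symmetric] \<beta>_def[symmetric] by simp
  next
    case False
    then have b1: "\<beta> \<le> 1" by simp
    have bpos: "\<beta> > 0" unfolding \<beta>_def by simp
    define k where "k = nat \<lceil>\<beta> * real n\<rceil>"
    have kb: "real k \<ge> \<beta> * real n" unfolding k_def by linarith
    have k1: "k \<ge> 1"
    proof -
      have "\<beta> * real n > 0" using bpos n0 by simp
      then have "\<lceil>\<beta> * real n\<rceil> > 0" by simp
      then show ?thesis unfolding k_def by linarith
    qed
    have kM: "real k \<ge> 3 * real M * ln (real M)"
    proof -
      have "\<beta> * real n \<ge> \<beta> * (exp (C / 8) * real M * ln (real M))" using nb bpos by (intro mult_left_mono) auto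
      also have "\<beta> * (exp (C / 8) * real M * ln (real M)) = 3 * real M * ln (real M) * (exp (- C / 8) * exp (C / 8))"
        unfolding \<beta>_def by (simp only: mult_ac)
      also have "exp (- C / 8) * exp (C / 8) = 1" by (simp add: exp_minus field_simps)
      finally show ?thesis using kb by simp
    qed
    define L where "L = 60 * M"
    have L0: "L > 0" unfolding L_def using M0 by simp
    define U where "U = {x :: nat \<Rightarrow> complex. nrm M x = 1}"
    define N where "N = rnd M L ` U"
    have finN: "finite N" and cardN0: "card N \<le> (2 * L + 1) ^ (2 * M)"
      using rnd_card[OF L0, of M] unfolding N_def U_def by auto
    have cardN: "real (card N) \<le> (121 * real M) ^ (2 * M)"
    proof -
      have "real (card N) \<le> real ((2 * L + 1) ^ (2 * M))" using cardN0 by linarith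
      also have "\<dots> = (120 * real M + 1) ^ (2 * M)" unfolding L_def by (simp add: add.commute)
      also have "\<dots> \<le> (121 * real M) ^ (2 * M)" using M0 by (intro power_mono) auto
      finally show ?thesis .
    qed
    have err: "nrm M (\<lambda>j. x j - rnd M L x j) \<le> 1 / 40" for x
    proof -
      have "(nrm M (\<lambda>j. x j - rnd M L x j))\<^sup>2 \<le> 2 * real M / (real L)\<^sup>2" by (rule rnd_err[OF L0])
      also have "\<dots> = 1 / (1800 * real M)" unfolding L_def using M0 by (simp add: power2_eq_square field_simps)
      also have "\<dots> \<le> (1 / 40)\<^sup>2" using M0 by (simp add: field_simps)
      finally show ?thesis by (rule power2_le_imp_le) simp
    qed
    have Nt: "\<exists>y\<in>N. nrm M (\<lambda>j. x j - y j) \<le> 1 / 40" if "nrm M x = 1" for x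
      using that err unfolding N_def U_def by blast
    have Nrho: "(\<Sum>j<M. (cmod (y j))\<^sup>2) \<le> 11 / 10" if yN: "y \<in> N" for y
    proof -
      obtain x where x: "nrm M x = 1" "y = rnd M L x" using yN unfolding N_def U_def by auto
      have "nrm M y \<le> nrm M x + nrm M (\<lambda>j. y j - x j)"
        using nrm_triangle[of M x "\<lambda>j. y j - x j"] by simp
      also have "nrm M (\<lambda>j. y j - x j) = nrm M (\<lambda>j. x j - y j)" unfolding nrm_def by (simp add: norm_minus_commute)
      finally have "nrm M y \<le> 41 / 40" using err[of x] x by simp
      then have "(nrm M y)\<^sup>2 \<le> (41 / 40)\<^sup>2" by (intro power_mono nrm_nonneg)
      moreover have "(41 / 40 :: real)\<^sup>2 \<le> 11 / 10" by (simp add: power2_eq_square)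
      ultimately show ?thesis unfolding nrm_sq by linarith
    qed
    define t where "t = (39 / 40)\<^sup>2 * real k * C / real M"
    define Sk where "Sk = {S. S \<subseteq> {0..<n} \<and> card S = k}"
    have finSk: "finite Sk" unfolding Sk_def by (rule finite_subset[of _ "Pow {0..<n}"]) auto
    have cardSk: "card Sk = n choose k" unfolding Sk_def using n_subsets[of "{0..<n}" k] by simp
    define E where "E = (\<lambda>p :: (nat \<Rightarrow> complex) \<times> nat set. {\<Phi> \<in> space GM. t \<le> (\<Sum>i\<in>snd p. (cmod (col_inner M (fst p) \<Phi> i))\<^sup>2)})"
    have Es: "E p \<in> sets GM" if "p \<in> N \<times> Sk" for p
    proof -
      have "snd p \<subseteq> {0..<n}" using that unfolding Sk_def by auto
      then have [measurable]: "(\<lambda>\<Phi>. \<Sum>i\<in>snd p. (cmod (col_inner M (fst p) \<Phi> i))\<^sup>2) \<in> borel_measurable GM"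
        unfolding GM_def by (rule meas_sumsq)
      show ?thesis unfolding E_def by measurable
    qed
    have cover: "space GM - G \<subseteq> (\<Union>p\<in>N \<times> Sk. E p)"
    proof
      fix \<Phi> assume \<Phi>: "\<Phi> \<in> space GM - G"
      then obtain x where xs: "(\<Sum>j<M. (cmod (x j))\<^sup>2) = 1"
        and nc: "\<not> real (card {i \<in> {0..<n}. (cmod (col_inner M x \<Phi> i))\<^sup>2 > C / real M}) < \<beta> * real n"
        unfolding G_def by auto
      define T where "T = {i \<in> {0..<n}. (cmod (col_inner M x \<Phi> i))\<^sup>2 > C / real M}"
      have x1: "nrm M x = 1" using xs nrm_eq_1 by blast
      have "\<beta> * real n \<le> real (card T)" using nc unfolding T_def by simp
      then have "\<lceil>\<beta> * real n\<rceil> \<le> int (card T)" by (simp add: ceiling_le_iff)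
      then have kT: "k \<le> card T" unfolding k_def by linarith
      obtain S where S: "S \<subseteq> T" "card S = k" "finite S" using obtain_subset_with_card_n[OF kT] by metis
      have SSk: "S \<in> Sk" unfolding Sk_def using S T_def by auto
      have Sne: "S \<noteq> {}" using S(2) k1 by auto
      have "(\<Sum>i\<in>S. C / real M) < (\<Sum>i\<in>S. (cmod (col_inner M x \<Phi> i))\<^sup>2)"
        using S Sne unfolding T_def by (intro sum_strict_mono) auto
      then have lt: "real k * C / real M < (\<Sum>i\<in>S. (cmod (col_inner M x \<Phi> i))\<^sup>2)" using S(2) by simp
      define a where "a = sqrt (real k * C / real M)"
      have a0: "a \<ge> 0" unfolding a_def using C by simp
      have ASx: "AS M S \<Phi> x > a" unfolding AS_def L2_set_def a_def using lt by simp
      obtain y where y: "y \<in> N" "AS M S \<Phi> y > (1 - 1/40) * a"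
        using net_reduce[where \<epsilon>="1/40" and N=N and x=x and S=S and \<Phi>=\<Phi> and a=a and M=M, OF _ _ Nt x1 ASx] by auto
      have "((1 - 1/40) * a)\<^sup>2 < (AS M S \<Phi> y)\<^sup>2" using y(2) a0 by (intro power_strict_mono) auto
      moreover have "((1 - 1/40) * a)\<^sup>2 = t"
      proof -
        have z0: "real k * C / real M \<ge> 0" using C M0 by simp
        have "((1 - 1/40) * a)\<^sup>2 = (39/40)\<^sup>2 * (sqrt (real k * C / real M))\<^sup>2"
          unfolding a_def by (simp only: power_mult_distrib) simp
        also have "\<dots> = (39/40)\<^sup>2 * (real k * C / real M)" using z0 by simp
        finally show ?thesis unfolding t_def by simp
      qed
      moreover have "(AS M S \<Phi> y)\<^sup>2 = (\<Sum>i\<in>S. (cmod (col_inner M y \<Phi> i))\<^sup>2)"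
        unfolding AS_def L2_set_def by (simp add: sum_nonneg)
      ultimately have "t \<le> (\<Sum>i\<in>S. (cmod (col_inner M y \<Phi> i))\<^sup>2)" by simp
      then have "\<Phi> \<in> E (y, S)" unfolding E_def using \<Phi> by simp
      then show "\<Phi> \<in> (\<Union>p\<in>N \<times> Sk. E p)" using y(1) SSk by blast
    qed
    have Ebound: "measure GM (E p) \<le> 2 ^ k * exp (- 3 * real k * C / 8)" if pN: "p \<in> N \<times> Sk" for p
    proof -
      obtain y S where p: "p = (y, S)" "y \<in> N" "S \<subseteq> {0..<n}" "card S = k" using pN unfolding Sk_def by auto
      define lam where "lam = 5 * real M / 11"
      define \<rho> where "\<rho> = (\<Sum>j<M. (cmod (y j))\<^sup>2)"
      have lam0: "lam > 0" unfolding lam_def using M0 by simp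
      have \<rho>0: "\<rho> \<ge> 0" unfolding \<rho>_def by (simp add: sum_nonneg)
      have \<rho>1: "\<rho> \<le> 11 / 10" unfolding \<rho>_def by (rule Nrho[OF p(2)])
      have a_eq: "lam * \<rho> / real M = 5 * \<rho> / 11" unfolding lam_def using M0 by simp
      have a1: "lam * \<rho> / real M < 1" unfolding a_eq using \<rho>1 by simp
      have "emeasure GM (E p) \<le> ennreal (exp (- lam * t) * (1 / (1 - lam * \<rho> / M)) ^ card S)"
        unfolding E_def GM_def p(1) \<rho>_def using tail_matrix[OF M0 p(3) lam0 a1[unfolded \<rho>_def]] by simp
      moreover have "exp (- lam * t) * (1 / (1 - lam * \<rho> / M)) ^ card S \<le> exp (- 3 * real k * C / 8) * 2 ^ k"
      proof (intro mult_mono)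
        define w where "w = real k * C"
        have w0: "w \<ge> 0" unfolding w_def using C by simp
        have e1: "lam * t = (7605 / 17600) * w" unfolding lam_def t_def w_def using M0 by (simp add: power2_eq_square field_simps)
        have e2: "- 3 * real k * C / 8 = - (3 / 8) * w" unfolding w_def by simp
        have "- lam * t \<le> - 3 * real k * C / 8" unfolding e2 using e1 w0 by (simp only: mult_minus_left)
        then show "exp (- lam * t) \<le> exp (- 3 * real k * C / 8)" by simp
        have "1 / (1 - lam * \<rho> / M) \<le> 2" unfolding a_eq using \<rho>0 \<rho>1 by (simp add: field_simps)
        then show "(1 / (1 - lam * \<rho> / M)) ^ card S \<le> 2 ^ k" unfolding p(4) using a1 by (intro power_mono) auto
      qed (use a1 in auto)
      ultimately have "ennreal (measure GM (E p)) \<le> ennreal (2 ^ k * exp (- 3 * real k * C / 8))"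
        using P.emeasure_eq_measure by (smt (verit) ennreal_leI mult.commute order_trans)
      then show ?thesis by (simp add: ennreal_le_iff)
    qed
    have "measure GM (space GM - G) \<le> measure GM (\<Union>p\<in>N \<times> Sk. E p)"
      using cover Es finSk finN by (intro P.finite_measure_mono) (auto intro!: sets.finite_UN)
    also have "\<dots> \<le> (\<Sum>p\<in>N \<times> Sk. measure GM (E p))"
      using Es finSk finN by (intro P.finite_measure_subadditive_finite) auto
    also have "\<dots> \<le> (\<Sum>p\<in>N \<times> Sk. 2 ^ k * exp (- 3 * real k * C / 8))"
      by (rule sum_mono) (rule Ebound)
    also have "\<dots> = real (card N) * (real (n choose k) * 2 ^ k * exp (- 3 * real k * C / 8))"
      by (simp add: card_cartesian_product cardSk)
    also have "\<dots> \<le> exp (- real M)"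
      by (rule final_arith[OF M b1[unfolded \<beta>_def] kb[unfolded \<beta>_def] k1 kM _ cardN]) simp
    finally have bad: "measure GM (space GM - G) \<le> exp (- real M)" .
    have "measure GM G = 1 - measure GM (space GM - G)"
      using P.finite_measure_compl[OF Gs] P.prob_space by simp
    then show ?thesis using bad unfolding GM_def[symmetric] G_def[symmetric] \<beta>_def[symmetric] by simp
  qed
qed


theorem lemma6p10:
  fixes C :: real
  assumes "C > 0"
  shows "\<exists>c0 c1. c0 > 0 \<and> c1 > 0 \<and>
    (\<forall>M n. M > 0 \<longrightarrow> real n \<ge> exp (C / 8) * real M * ln (real M) \<longrightarrow>
       measure (gaussian_matrix M n)
         {Phi \<in> space (gaussian_matrix M n).
            \<forall>x :: nat \<Rightarrow> complex. (\<Sum>j<M. (cmod (x j))\<^sup>2) = 1 \<longrightarrow>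
              real (card {i \<in> {0..<n}. (cmod (col_inner M x Phi i))\<^sup>2 > C / real M})
                < 3 * exp (- C / 8) * real n}
       \<ge> 1 - c0 * exp (- c1 * real M))"
proof -
  have key: "\<forall>M n. M > 0 \<longrightarrow> real n \<ge> exp (C / 8) * real M * ln (real M) \<longrightarrow>
       measure (gaussian_matrix M n)
         {Phi \<in> space (gaussian_matrix M n).
            \<forall>x :: nat \<Rightarrow> complex. (\<Sum>j<M. (cmod (x j))\<^sup>2) = 1 \<longrightarrow>
              real (card {i \<in> {0..<n}. (cmod (col_inner M x Phi i))\<^sup>2 > C / real M})
                < 3 * exp (- C / 8) * real n}
       \<ge> 1 - exp 50000 * exp (- 1 * real M)"
  proof (intro allI impI)
    fix M n :: nat
    assume M0: "M > 0" and nb: "real n \<ge> exp (C / 8) * real M * ln (real M)"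
    show "measure (gaussian_matrix M n)
         {Phi \<in> space (gaussian_matrix M n).
            \<forall>x :: nat \<Rightarrow> complex. (\<Sum>j<M. (cmod (x j))\<^sup>2) = 1 \<longrightarrow>
              real (card {i \<in> {0..<n}. (cmod (col_inner M x Phi i))\<^sup>2 > C / real M})
                < 3 * exp (- C / 8) * real n}
       \<ge> 1 - exp 50000 * exp (- 1 * real M)"
    proof (cases "real M \<ge> 50000")
      case True
      have "exp (- real M) \<le> exp 50000 * exp (- 1 * real M)" by simp
      then show ?thesis using main_large[OF assms True nb] by linarith
    next
      case False
      have "exp 50000 * exp (- 1 * real M) = exp (50000 - real M)" by (simp add: exp_diff exp_minus field_simps)
      also have "\<dots> \<ge> 1" using False by simp
      finally show ?thesis by (smt (verit) measure_nonneg)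
    qed
  qed
  show ?thesis by (rule exI[of _ "exp 50000"], rule exI[of _ 1]) (use key in simp)
qed

end
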